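(* Let $q$ be a nonzero real number with $|q|\neq1$, let $a_0,\dots,a_k\in\mathbb{C}[z]$ be polynomials, and let $T_1(p)(z)=a_0(z)p(z)+a_1(z)p(qz)+\dots+a_k(z)p(q^kz)$. Then $T_1(\mathcal{LP}(\mathbb{R};2))\subset\mathcal{LP}(\mathbb{R};2)$ if and only if $a_i\not\equiv0$ for at most one index $i$ and this $a_i$ belongs to $\mathcal{HP}$.
   Context: $\mathcal{HP}$ is the set of (nonzero) polynomials with real coefficients all of whose zeros are real. $\mathcal{LP}(\mathbb{R})$ is the set of entire $f(z)=h(z)e^{-\alpha z^2+\beta z}$ with $h(z)=cz^n\prod_k(1-z/z_k)e^{tz/z_k}$, $\beta\in\mathbb{R}$, $c\in\mathbb{R}\setminus\{0\}$, $\alpha\ge0$, $t\in\{0,1\}$, $n\in\mathbb{Z}_{\ge0}$, $\{z_k\}$ a finite or infinite sequence of real numbers with $\sum_k|z_k|^{-t-1}<\infty$. $\mathcal{LP}(\mathbb{R};2)$ is the subset of $\mathcal{LP}(\mathbb{R})$ of those $f$ whose representation has $\alpha>0$. *)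

theory Defs
  imports "HOL-Analysis.Analysis" "HOL-Computational_Algebra.Polynomial"
begin

definition wfac :: "nat \<Rightarrow> real \<Rightarrow> complex \<Rightarrow> complex" where
  "wfac t w z = (1 - z / complex_of_real w) * exp (of_nat t * z / complex_of_real w)"

text \<open>h is the (canonical) product over the zero sequence zs, which is finite
  (fin = Some N: zeros zs 0, ..., zs (N-1)) or infinite (fin = None), with
  the zeros nonzero and, in the infinite case, sum |z_k|^(-t-1) finite;
  the infinite product is the pointwise limit of the partial products.\<close>
definition canonical_prod :: "nat \<Rightarrow> (nat \<Rightarrow> real) \<Rightarrow> nat option \<Rightarrow> (complex \<Rightarrow> complex) \<Rightarrow> bool" where
  "canonical_prod t zs fin P =
     (case fin of
        Some N \<Rightarrow> (\<forall>k<N. zs k \<noteq> 0) \<and> (\<forall>z. P z = (\<Prod>k<N. wfac t (zs k) z))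
      | None \<Rightarrow> (\<forall>k. zs k \<noteq> 0) \<and> summable (\<lambda>k. \<bar>zs k\<bar> powr (- (real t + 1))) \<and>
                (\<forall>z. (\<lambda>m. \<Prod>k<m. wfac t (zs k) z) \<longlonglongrightarrow> P z))"

definition LP_repr :: "(complex \<Rightarrow> complex) \<Rightarrow> real \<Rightarrow> bool" where
  "LP_repr f \<alpha> = (\<exists>c n t \<beta> zs fin P.
      c \<noteq> 0 \<and> \<alpha> \<ge> 0 \<and> t \<le> 1 \<and> canonical_prod t zs fin P \<and>
      (\<forall>z. f z = complex_of_real c * z ^ n * P z *
                 exp (- complex_of_real \<alpha> * z ^ 2 + complex_of_real \<beta> * z)))"

definition LP :: "(complex \<Rightarrow> complex) set" where
  "LP = {f. \<exists>\<alpha>. LP_repr f \<alpha>}"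

definition LP2 :: "(complex \<Rightarrow> complex) set" where
  "LP2 = {f. \<exists>\<alpha>>0. LP_repr f \<alpha>}"

definition HP :: "complex poly set" where
  "HP = {p. p \<noteq> 0 \<and> (\<forall>i. coeff p i \<in> \<real>) \<and> (\<forall>z. poly p z = 0 \<longrightarrow> z \<in> \<real>)}"

definition T1 :: "real \<Rightarrow> nat \<Rightarrow> (nat \<Rightarrow> complex poly) \<Rightarrow> (complex \<Rightarrow> complex) \<Rightarrow> complex \<Rightarrow> complex" where
  "T1 q k a f = (\<lambda>z. \<Sum>i\<le>k. poly (a i) z * f (complex_of_real (q ^ i) * z))"

end

theory Submission
  imports Defs "HOL-Complex_Analysis.Complex_Analysis" "HOL-Computational_Algebra.Fundamental_Theorem_Algebra" "HOL-Real_Asymp.Real_Asymp"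
begin


lemma wfac_scale:
  assumes "q \<noteq> 0" "w \<noteq> 0"
  shows "wfac t (w / q) z = wfac t w (complex_of_real q * z)"
  using assms by (simp add: wfac_def field_simps)

lemma canonical_prod_scale:
  assumes "canonical_prod t zs fin P" "q \<noteq> 0"
  shows "canonical_prod t (\<lambda>k. zs k / q) fin (\<lambda>z. P (complex_of_real q * z))"
proof (cases fin)
  case None
  with assms have nz: "\<forall>k. zs k \<noteq> 0" and sm: "summable (\<lambda>k. \<bar>zs k\<bar> powr (- (real t + 1)))"
    and lim: "\<forall>z. (\<lambda>m. \<Prod>k<m. wfac t (zs k) z) \<longlonglongrightarrow> P z"
    by (auto simp: canonical_prod_def)
  have "summable (\<lambda>k. \<bar>zs k / q\<bar> powr (- (real t + 1)))"
    using sm by (simp add: abs_divide powr_divide assms powr_minus divide_simps)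
  moreover have "(\<lambda>m. \<Prod>k<m. wfac t (zs k / q) z) \<longlonglongrightarrow> P (complex_of_real q * z)" for z
    using lim[rule_format, of "complex_of_real q * z"] by (simp add: wfac_scale nz assms)
  ultimately show ?thesis using None nz assms by (auto simp: canonical_prod_def)
next
  case (Some N)
  with assms show ?thesis by (auto simp: canonical_prod_def wfac_scale)
qed

lemma LP_repr_scale:
  assumes "LP_repr f \<alpha>" "q \<noteq> 0"
  shows "LP_repr (\<lambda>z. f (complex_of_real q * z)) (\<alpha> * q\<^sup>2)"
proof -
  obtain c n t \<beta> zs fin P where h: "c \<noteq> 0" "\<alpha> \<ge> 0" "t \<le> 1" "canonical_prod t zs fin P"
    "\<forall>z. f z = complex_of_real c * z ^ n * P z * exp (- complex_of_real \<alpha> * z ^ 2 + complex_of_real \<beta> * z)"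
    using assms(1) unfolding LP_repr_def by blast
  show ?thesis unfolding LP_repr_def
  proof (intro exI conjI allI)
    show "c * q ^ n \<noteq> 0" using h assms by simp
    show "\<alpha> * q\<^sup>2 \<ge> 0" using h by simp
    show "t \<le> 1" by fact
    show "canonical_prod t (\<lambda>k. zs k / q) fin (\<lambda>z. P (complex_of_real q * z))"
      by (rule canonical_prod_scale[OF h(4) assms(2)])
    fix z
    show "f (complex_of_real q * z) = complex_of_real (c * q ^ n) * z ^ n * P (complex_of_real q * z) *
      exp (- complex_of_real (\<alpha> * q\<^sup>2) * z\<^sup>2 + complex_of_real (\<beta> * q) * z)"
      by (simp add: h(5) power_mult_distrib algebra_simps)
  qed
qed

lemma canonical_prod_cons:
  assumes "canonical_prod t zs fin P" "r \<noteq> 0"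
  shows "canonical_prod t (\<lambda>k. if k = 0 then r else zs (k - 1)) (map_option Suc fin) (\<lambda>z. wfac t r z * P z)"
proof (cases fin)
  case None
  with assms have nz: "\<forall>k. zs k \<noteq> 0" and sm: "summable (\<lambda>k. \<bar>zs k\<bar> powr (- (real t + 1)))"
    and lim: "\<forall>z. (\<lambda>m. \<Prod>k<m. wfac t (zs k) z) \<longlonglongrightarrow> P z"
    by (auto simp: canonical_prod_def)
  let ?zs = "\<lambda>k. if k = 0 then r else zs (k - 1)"
  have "summable (\<lambda>k. \<bar>?zs (Suc k)\<bar> powr (- (real t + 1)))" using sm by simp
  hence "summable (\<lambda>k. \<bar>?zs k\<bar> powr (- (real t + 1)))" by (subst (asm) summable_Suc_iff)
  moreover have "(\<lambda>m. \<Prod>k<m. wfac t (?zs k) z) \<longlonglongrightarrow> wfac t r z * P z" for z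
  proof -
    have "(\<lambda>m. \<Prod>k<Suc m. wfac t (?zs k) z) \<longlonglongrightarrow> wfac t r z * P z"
      using tendsto_mult_left[OF lim[rule_format, of z], of "wfac t r z"]
      by (simp add: prod.lessThan_Suc_shift del: prod.lessThan_Suc)
    thus ?thesis by (subst (asm) filterlim_sequentially_Suc)
  qed
  ultimately show ?thesis using None nz assms by (auto simp: canonical_prod_def)
next
  case (Some N)
  with assms show ?thesis
    by (auto simp: canonical_prod_def prod.lessThan_Suc_shift less_Suc_eq_0_disj simp del: prod.lessThan_Suc)
qed

lemma LP_repr_lin:
  assumes "LP_repr f \<alpha>" "r \<noteq> 0"
  shows "LP_repr (\<lambda>z. (1 - z / complex_of_real r) * f z) \<alpha>"
proof -
  obtain c n t \<beta> zs fin P where h: "c \<noteq> 0" "\<alpha> \<ge> 0" "t \<le> 1" "canonical_prod t zs fin P"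
    "\<forall>z. f z = complex_of_real c * z ^ n * P z * exp (- complex_of_real \<alpha> * z ^ 2 + complex_of_real \<beta> * z)"
    using assms(1) unfolding LP_repr_def by blast
  show ?thesis unfolding LP_repr_def
  proof (intro exI conjI allI)
    show "c \<noteq> 0" "\<alpha> \<ge> 0" "t \<le> 1" using h by auto
    show "canonical_prod t (\<lambda>k. if k = 0 then r else zs (k - 1)) (map_option Suc fin) (\<lambda>z. wfac t r z * P z)"
      by (rule canonical_prod_cons[OF h(4) assms(2)])
    fix z
    have e: "1 - z / complex_of_real r = wfac t r z * exp (- (of_nat t * z / complex_of_real r))"
      by (simp add: wfac_def exp_minus field_simps)
    show "(1 - z / complex_of_real r) * f z = complex_of_real c * z ^ n * (wfac t r z * P z) *
      exp (- complex_of_real \<alpha> * z\<^sup>2 + complex_of_real (\<beta> - real t / r) * z)"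
      unfolding e h(5)[rule_format] by (simp add: exp_add[symmetric] mult_exp_exp algebra_simps diff_divide_distrib)
  qed
qed

lemma LP_repr_z:
  assumes "LP_repr f \<alpha>"
  shows "LP_repr (\<lambda>z. z * f z) \<alpha>"
proof -
  obtain c n t \<beta> zs fin P where h: "c \<noteq> 0" "\<alpha> \<ge> 0" "t \<le> 1" "canonical_prod t zs fin P"
    "\<forall>z. f z = complex_of_real c * z ^ n * P z * exp (- complex_of_real \<alpha> * z ^ 2 + complex_of_real \<beta> * z)"
    using assms(1) unfolding LP_repr_def by blast
  show ?thesis unfolding LP_repr_def
    by (rule exI[of _ c], rule exI[of _ "Suc n"], rule exI[of _ t], rule exI[of _ \<beta>])
       (use h in \<open>auto simp: algebra_simps\<close>)
qed

lemma LP_repr_const: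
  assumes "LP_repr f \<alpha>" "d \<noteq> 0"
  shows "LP_repr (\<lambda>z. complex_of_real d * f z) \<alpha>"
proof -
  obtain c n t \<beta> zs fin P where h: "c \<noteq> 0" "\<alpha> \<ge> 0" "t \<le> 1" "canonical_prod t zs fin P"
    "\<forall>z. f z = complex_of_real c * z ^ n * P z * exp (- complex_of_real \<alpha> * z ^ 2 + complex_of_real \<beta> * z)"
    using assms(1) unfolding LP_repr_def by blast
  show ?thesis unfolding LP_repr_def
    by (rule exI[of _ "d * c"], rule exI[of _ n], rule exI[of _ t], rule exI[of _ \<beta>])
       (use h assms in \<open>auto simp: algebra_simps\<close>)
qed

lemma LP_repr_linr:
  assumes "LP_repr f \<alpha>"
  shows "LP_repr (\<lambda>z. (z - complex_of_real r) * f z) \<alpha>"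
proof (cases "r = 0")
  case True thus ?thesis using LP_repr_z[OF assms] by simp
next
  case False
  have "LP_repr (\<lambda>z. complex_of_real (- r) * ((1 - z / complex_of_real r) * f z)) \<alpha>"
    by (rule LP_repr_const[OF LP_repr_lin[OF assms False]]) (use False in simp)
  moreover have "complex_of_real (- r) * ((1 - z / complex_of_real r) * f z) = (z - complex_of_real r) * f z" for z
    using False by (simp add: field_simps)
  ultimately show ?thesis by simp
qed

lemma LP_repr_prod:
  fixes d :: nat and rt :: "nat \<Rightarrow> complex"
  assumes "LP_repr f \<alpha>" "\<forall>i<d. rt i \<in> \<real>"
  shows "LP_repr (\<lambda>z. (\<Prod>i<d. (z - rt i)) * f z) \<alpha>"
  using assms(2)
proof (induction d)
  case 0 thus ?case using assms(1) by simp
next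
  case (Suc d)
  then obtain r where r: "rt d = complex_of_real r" by (auto elim!: Reals_cases)
  have "LP_repr (\<lambda>z. (z - complex_of_real r) * ((\<Prod>i<d. (z - rt i)) * f z)) \<alpha>"
    by (rule LP_repr_linr) (use Suc in auto)
  thus ?case by (simp add: r algebra_simps)
qed

lemma LP_repr_HP:
  assumes "LP_repr f \<alpha>" "p \<in> HP"
  shows "LP_repr (\<lambda>z. poly p z * f z) \<alpha>"
proof -
  obtain rt where rt: "smult (lead_coeff p) (\<Prod>i<degree p. [:-rt i, 1:]) = p"
    using complex_poly_decompose' by blast
  have pz: "poly p z = lead_coeff p * (\<Prod>i<degree p. (z - rt i))" for z
    by (subst rt[symmetric]) (simp add: poly_prod)
  have "rt i \<in> \<real>" if "i < degree p" for i
  proof -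
    have "poly p (rt i) = 0" unfolding pz using that by (auto intro: prod_zero)
    thus ?thesis using assms(2) by (auto simp: HP_def)
  qed
  hence L: "LP_repr (\<lambda>z. (\<Prod>i<degree p. (z - rt i)) * f z) \<alpha>"
    by (intro LP_repr_prod assms(1)) auto
  have "lead_coeff p \<in> \<real>" "lead_coeff p \<noteq> 0" using assms(2) by (auto simp: HP_def)
  then obtain l where l: "lead_coeff p = complex_of_real l" "l \<noteq> 0"
    by (metis Reals_cases of_real_0)
  show ?thesis using LP_repr_const[OF L l(2)] by (simp add: pz l(1) mult.assoc)
qed

lemma if_dir:
  assumes "q \<noteq> 0" "j \<le> k" "\<forall>i\<le>k. i \<noteq> j \<longrightarrow> a i = 0" "a j \<in> HP" "f \<in> LP2"
  shows "T1 q k a f \<in> LP2"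
proof -
  obtain \<alpha> where \<alpha>: "\<alpha> > 0" "LP_repr f \<alpha>" using assms(5) by (auto simp: LP2_def)
  have T: "T1 q k a f = (\<lambda>z. poly (a j) z * f (complex_of_real (q ^ j) * z))"
  proof
    fix z
    have "T1 q k a f z = (\<Sum>i\<le>k. if i = j then poly (a j) z * f (complex_of_real (q ^ j) * z) else 0)"
      unfolding T1_def by (rule sum.cong) (use assms(3) in auto)
    thus "T1 q k a f z = poly (a j) z * f (complex_of_real (q ^ j) * z)" using assms(2) by simp
  qed
  have "LP_repr (\<lambda>z. poly (a j) z * f (complex_of_real (q ^ j) * z)) (\<alpha> * (q ^ j)\<^sup>2)"
    by (intro LP_repr_HP assms LP_repr_scale[OF \<alpha>(2)]) (use assms in simp)
  moreover have "\<alpha> * (q ^ j)\<^sup>2 > 0" using \<alpha> assms by simp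
  ultimately show ?thesis unfolding T LP2_def by blast
qed



lemma real_E1_bound: "\<bar>1 - u\<bar> * exp u \<le> exp ((u::real)\<^sup>2)"
proof (cases "u \<le> 1")
  case True
  have "1 - u \<le> exp (- u)" using exp_ge_add_one_self[of "-u"] by simp
  hence "\<bar>1 - u\<bar> * exp u \<le> exp (-u) * exp u" using True by (intro mult_right_mono) auto
  also have "\<dots> = 1" by (simp add: exp_minus)
  also have "1 \<le> exp (u\<^sup>2)" by simp
  finally show ?thesis .
next
  case False
  have "u - 1 \<le> exp (u - 2)" using exp_ge_add_one_self[of "u - 2"] by simp
  hence "\<bar>1 - u\<bar> * exp u \<le> exp (u - 2) * exp u" using False by (intro mult_right_mono) auto
  also have "\<dots> = exp (2*u - 2)" by (simp add: exp_add[symmetric])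
  also have "\<dots> \<le> exp (u\<^sup>2)"
  proof -
    have "2*u - 2 \<le> u\<^sup>2" using zero_le_power2[of "u - 1"] unfolding power2_eq_square by argo
    thus ?thesis by simp
  qed
  finally show ?thesis .
qed

lemma wfac_bound_real:
  assumes "r \<noteq> 0" "t \<le> 1"
  shows "norm (wfac t r (complex_of_real x)) \<le> exp (2 * \<bar>x\<bar> / \<bar>r\<bar>)"
    and "t = 1 \<Longrightarrow> norm (wfac t r (complex_of_real x)) \<le> exp (x\<^sup>2 / r\<^sup>2)"
proof -
  define u where "u = x / r"
  have w: "wfac t r (complex_of_real x) = complex_of_real ((1 - u) * exp (real t * u))"
    by (simp add: wfac_def u_def exp_of_real[symmetric])
  have "\<bar>1 - u\<bar> \<le> exp \<bar>u\<bar>" using exp_ge_add_one_self[of "\<bar>u\<bar>"] by linarith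
  moreover have "exp (real t * u) \<le> exp \<bar>u\<bar>" using assms by (cases t) auto
  ultimately have "\<bar>1 - u\<bar> * exp (real t * u) \<le> exp \<bar>u\<bar> * exp \<bar>u\<bar>" by (intro mult_mono) auto
  also have "\<dots> = exp (2 * \<bar>x\<bar> / \<bar>r\<bar>)" by (simp add: exp_add[symmetric] u_def abs_divide)
  finally show "norm (wfac t r (complex_of_real x)) \<le> exp (2 * \<bar>x\<bar> / \<bar>r\<bar>)"
    unfolding w norm_of_real abs_mult by simp
  assume "t = 1"
  thus "norm (wfac t r (complex_of_real x)) \<le> exp (x\<^sup>2 / r\<^sup>2)"
    using real_E1_bound[of u] unfolding w norm_of_real abs_mult by (simp add: u_def power_divide)
qed

lemma wfac_bound_imag:
  assumes "r \<noteq> 0" "t \<le> 1"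
  shows "norm (wfac t r (\<i> * complex_of_real x)) \<le> exp (2 * \<bar>x\<bar> / \<bar>r\<bar>)"
    and "norm (wfac t r (\<i> * complex_of_real x)) \<le> exp (x\<^sup>2 / r\<^sup>2)"
    and "norm (wfac t r (\<i> * complex_of_real x)) \<ge> 1"
proof -
  define u where "u = x / r"
  have n1: "norm (1 - \<i> * complex_of_real x / complex_of_real r) = sqrt (1 + u\<^sup>2)"
  proof -
    have "1 - \<i> * complex_of_real x / complex_of_real r = Complex 1 (- u)"
      by (simp add: complex_eq_iff u_def)
    thus ?thesis by (simp add: cmod_def)
  qed
  have n2: "norm (exp (of_nat t * (\<i> * complex_of_real x) / complex_of_real r)) = 1"
    by (simp add: norm_exp_eq_Re)
  have nw: "norm (wfac t r (\<i> * complex_of_real x)) = sqrt (1 + u\<^sup>2)"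
    unfolding wfac_def norm_mult n1 n2 by simp
  have "sqrt (1 + u\<^sup>2) \<le> 1 + \<bar>u\<bar>"
    by (rule real_le_lsqrt) (simp_all add: power2_eq_square algebra_simps)
  also have "\<dots> \<le> exp \<bar>u\<bar>" using exp_ge_add_one_self[of "\<bar>u\<bar>"] by linarith
  also have "\<dots> \<le> exp (2 * \<bar>x\<bar> / \<bar>r\<bar>)" by (simp add: u_def abs_divide divide_simps)
  finally show "norm (wfac t r (\<i> * complex_of_real x)) \<le> exp (2 * \<bar>x\<bar> / \<bar>r\<bar>)" using nw by simp
  have "1 + u\<^sup>2 \<le> exp (u\<^sup>2)" using exp_ge_add_one_self[of "u\<^sup>2"] by simp
  also have "\<dots> \<le> (exp (u\<^sup>2))\<^sup>2" by (simp add: power2_eq_square)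
  finally have "sqrt (1 + u\<^sup>2) \<le> exp (u\<^sup>2)" by (intro real_le_lsqrt) simp_all
  thus "norm (wfac t r (\<i> * complex_of_real x)) \<le> exp (x\<^sup>2 / r\<^sup>2)" using nw by (simp add: u_def power_divide)
  show "norm (wfac t r (\<i> * complex_of_real x)) \<ge> 1" using nw by simp
qed



lemma wfac_wf: "t \<le> 1 \<Longrightarrow> wfac t w z = weierstrass_factor t (z / complex_of_real w)"
  by (cases t) (auto simp: wfac_def weierstrass_factor_def)

lemma wfac_nonzero: "z \<notin> \<real> \<Longrightarrow> wfac t w z \<noteq> 0"
proof
  assume z: "z \<notin> \<real>" and "wfac t w z = 0"
  hence "1 - z / complex_of_real w = 0" by (simp add: wfac_def)
  hence "z = complex_of_real w" by (cases "w = 0") (auto simp: field_simps)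
  with z show False by simp
qed

lemma powr_neg_Suc: "r \<noteq> 0 \<Longrightarrow> \<bar>r\<bar> powr (- (real t + 1)) = 1 / \<bar>r\<bar> ^ Suc t"
proof -
  assume "r \<noteq> 0"
  hence "\<bar>r\<bar> powr (real t + 1) = \<bar>r\<bar> ^ Suc t" using powr_realpow[of "\<bar>r\<bar>" "Suc t"] by (simp add: add.commute)
  thus ?thesis by (subst powr_minus) (simp add: inverse_eq_divide del: power_Suc)
qed

lemma cp_nonzero:
  assumes "canonical_prod t zs fin P" "t \<le> 1" "z \<notin> \<real>"
  shows "P z \<noteq> 0"
proof (cases fin)
  case (Some N)
  with assms show ?thesis by (auto simp: canonical_prod_def wfac_nonzero)
next
  case None
  with assms(1) have nz: "\<forall>k. zs k \<noteq> 0" and sm: "summable (\<lambda>k. \<bar>zs k\<bar> powr (- (real t + 1)))"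
    and lim: "(\<lambda>m. \<Prod>k<m. wfac t (zs k) z) \<longlonglongrightarrow> P z"
    by (auto simp: canonical_prod_def)
  define g where "g k = wfac t (zs k) z" for k
  define h where "h k = norm (z / complex_of_real (zs k)) ^ Suc t" for k
  have h_eq: "h k = norm z ^ Suc t * (\<bar>zs k\<bar> powr (- (real t + 1)))" for k
    unfolding h_def powr_neg_Suc[OF nz[rule_format]] by (simp add: norm_divide power_divide del: power_Suc)
  have smh: "summable h" unfolding h_eq by (intro summable_mult sm)
  hence "h \<longlonglongrightarrow> 0" by (rule summable_LIMSEQ_zero)
  hence ev: "eventually (\<lambda>k. h k < (1/2) ^ Suc t) sequentially"
    by (rule order_tendstoD) simp
  have "eventually (\<lambda>k. norm (norm (g k - 1)) \<le> 3 * h k) sequentially"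
    using ev
  proof eventually_elim
    case (elim k)
    hence "norm (z / complex_of_real (zs k)) < 1/2"
      unfolding h_def by (rule power_less_imp_less_base) simp
    thus ?case using weierstrass_factor_bound[of "z / complex_of_real (zs k)" t]
      by (simp add: g_def h_def wfac_wf[OF assms(2)])
  qed
  hence "summable (\<lambda>k. norm (g k - 1))"
    by (rule summable_comparison_test_ev) (intro summable_mult smh)
  hence "abs_convergent_prod g" by (rule summable_imp_abs_convergent_prod)
  hence cp: "convergent_prod g" by (rule abs_convergent_prod_imp_convergent_prod)
  have gnz: "g k \<noteq> 0" for k unfolding g_def by (rule wfac_nonzero[OF assms(3)])
  have "(\<lambda>n. \<Prod>i\<le>n. g i) \<longlonglongrightarrow> prodinf g" by (rule convergent_prod_LIMSEQ[OF cp])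
  moreover have "(\<lambda>n. \<Prod>i\<le>n. g i) \<longlonglongrightarrow> P z"
    using LIMSEQ_Suc[OF lim] by (simp add: g_def lessThan_Suc_atMost)
  ultimately have "P z = prodinf g" using LIMSEQ_unique by blast
  thus ?thesis using prodinf_nonzero[OF cp gnz] by simp
qed

lemma wfac_real: "wfac t w (complex_of_real x) \<in> \<real>"
  by (simp add: wfac_def exp_of_real[symmetric])

lemma cp_real:
  assumes "canonical_prod t zs fin P"
  shows "P (complex_of_real x) \<in> \<real>"
proof (cases fin)
  case (Some N)
  with assms show ?thesis by (auto simp: canonical_prod_def wfac_real intro!: prod_in_Reals)
next
  case None
  with assms have lim: "(\<lambda>m. \<Prod>k<m. wfac t (zs k) (complex_of_real x)) \<longlonglongrightarrow> P (complex_of_real x)"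
    by (auto simp: canonical_prod_def)
  have "(\<lambda>m. Im (\<Prod>k<m. wfac t (zs k) (complex_of_real x))) \<longlonglongrightarrow> Im (P (complex_of_real x))"
    by (rule tendsto_Im[OF lim])
  moreover have "Im (\<Prod>k<m. wfac t (zs k) (complex_of_real x)) = 0" for m
    using prod_in_Reals[of "{..<m}" "\<lambda>k. wfac t (zs k) (complex_of_real x)"] wfac_real
    by (simp add: complex_is_Real_iff)
  ultimately have "Im (P (complex_of_real x)) = 0" by (simp add: LIMSEQ_const_iff)
  thus ?thesis by (simp add: complex_is_Real_iff)
qed



lemma wfac_bound:
  assumes "r \<noteq> 0" "t \<le> 1" "w = complex_of_real x \<or> w = \<i> * complex_of_real x"
  shows "norm (wfac t r w) \<le> exp (2 * \<bar>x\<bar> / \<bar>r\<bar>)"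
    and "t = 1 \<Longrightarrow> norm (wfac t r w) \<le> exp (x\<^sup>2 / r\<^sup>2)"
  using assms wfac_bound_real[OF assms(1,2)] wfac_bound_imag[OF assms(1,2)] by auto

lemma prod_bound_aux:
  fixes g :: "nat \<Rightarrow> complex"
  assumes "\<And>k. norm (g k) \<le> exp (b k)" "\<And>k. b k \<ge> 0" "summable b"
  shows "norm (\<Prod>k<m. g k) \<le> exp (suminf b)"
proof -
  have "norm (\<Prod>k<m. g k) = (\<Prod>k<m. norm (g k))" by (simp add: prod_norm)
  also have "\<dots> \<le> (\<Prod>k<m. exp (b k))" by (intro prod_mono) (use assms in auto)
  also have "\<dots> = exp (\<Sum>k<m. b k)" by (simp add: exp_sum)
  also have "\<dots> \<le> exp (suminf b)" using sum_le_suminf[OF assms(3), of "{..<m}"] assms(2) by simp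
  finally show ?thesis .
qed

lemma growth:
  assumes "canonical_prod t zs fin P" "t \<le> 1" "\<epsilon> > 0"
  shows "\<exists>C. \<forall>x w. (w = complex_of_real x \<or> w = \<i> * complex_of_real x) \<longrightarrow>
            norm (P w) \<le> exp (C * \<bar>x\<bar> + \<epsilon> * x\<^sup>2)"
proof (cases fin)
  case (Some N)
  with assms have nz: "\<forall>k<N. zs k \<noteq> 0" and P: "\<forall>z. P z = (\<Prod>k<N. wfac t (zs k) z)"
    by (auto simp: canonical_prod_def)
  show ?thesis
  proof (intro exI allI impI)
    fix x w assume w: "w = complex_of_real x \<or> w = \<i> * complex_of_real x"
    have "norm (P w) = (\<Prod>k<N. norm (wfac t (zs k) w))" by (simp add: P prod_norm)
    also have "\<dots> \<le> (\<Prod>k<N. exp (2 * \<bar>x\<bar> / \<bar>zs k\<bar>))"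
      by (intro prod_mono conjI norm_ge_zero wfac_bound(1)[OF _ assms(2) w]) (use nz in auto)
    also have "\<dots> = exp ((2 * (\<Sum>k<N. 1 / \<bar>zs k\<bar>)) * \<bar>x\<bar>)"
      by (simp add: exp_sum[symmetric] sum_distrib_left sum_distrib_right)
    also have "\<dots> \<le> exp ((2 * (\<Sum>k<N. 1 / \<bar>zs k\<bar>)) * \<bar>x\<bar> + \<epsilon> * x\<^sup>2)" using assms(3) by simp
    finally show "norm (P w) \<le> exp ((2 * (\<Sum>k<N. 1 / \<bar>zs k\<bar>)) * \<bar>x\<bar> + \<epsilon> * x\<^sup>2)" .
  qed
next
  case None
  with assms(1) have nz: "\<forall>k. zs k \<noteq> 0" and sm: "summable (\<lambda>k. \<bar>zs k\<bar> powr (- (real t + 1)))"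
    and lim: "\<forall>z. (\<lambda>m. \<Prod>k<m. wfac t (zs k) z) \<longlonglongrightarrow> P z"
    by (auto simp: canonical_prod_def)
  have sm': "summable (\<lambda>k. 1 / \<bar>zs k\<bar> ^ Suc t)"
    using sm by (simp only: powr_neg_Suc[OF nz[rule_format]])
  have limb: "norm (P w) \<le> B" if "\<And>m. norm (\<Prod>k<m. wfac t (zs k) w) \<le> B" for w B
    by (rule LIMSEQ_le_const2[OF tendsto_norm[OF lim[rule_format, of w]]]) (use that in auto)
  show ?thesis
  proof (cases "t = 0")
    case True
    define S where "S = (\<Sum>k. 1 / \<bar>zs k\<bar>)"
    have smS: "summable (\<lambda>k. 1 / \<bar>zs k\<bar>)" using sm' True by simp
    show ?thesis
    proof (intro exI allI impI)
      fix x w assume w: "w = complex_of_real x \<or> w = \<i> * complex_of_real x"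
      have "norm (\<Prod>k<m. wfac t (zs k) w) \<le> exp (\<Sum>k. 2 * \<bar>x\<bar> * (1 / \<bar>zs k\<bar>))" for m
      proof (rule prod_bound_aux)
        show "summable (\<lambda>k. 2 * \<bar>x\<bar> * (1 / \<bar>zs k\<bar>))" by (rule summable_mult[OF smS])
      qed (use wfac_bound(1)[OF _ assms(2) w] nz in auto)
      also have "(\<Sum>k. 2 * \<bar>x\<bar> * (1 / \<bar>zs k\<bar>)) = (2 * S) * \<bar>x\<bar>"
        unfolding S_def using suminf_mult[OF smS, of "2 * \<bar>x\<bar>"] by simp
      finally have "norm (P w) \<le> exp ((2 * S) * \<bar>x\<bar>)" by (intro limb)
      also have "\<dots> \<le> exp ((2 * S) * \<bar>x\<bar> + \<epsilon> * x\<^sup>2)" using assms(3) by simp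
      finally show "norm (P w) \<le> exp ((2 * S) * \<bar>x\<bar> + \<epsilon> * x\<^sup>2)" .
    qed
  next
    case False
    with assms(2) have t1: "t = 1" by simp
    define s where "s k = 1 / (zs k)\<^sup>2" for k
    have "s = (\<lambda>k. 1 / \<bar>zs k\<bar> ^ Suc t)" using t1 by (auto simp: s_def power2_eq_square fun_eq_iff)
    hence sms: "summable s" using sm' by simp
    obtain N where N: "\<forall>n\<ge>N. norm (\<Sum>i. s (i + n)) < \<epsilon>"
      using suminf_exist_split[OF assms(3) sms] by blast
    define C where "C = 2 * (\<Sum>k<N. 1 / \<bar>zs k\<bar>)"
    show ?thesis
    proof (intro exI allI impI)
      fix x w assume w: "w = complex_of_real x \<or> w = \<i> * complex_of_real x"
      define b where "b k = (if k < N then 2 * \<bar>x\<bar> / \<bar>zs k\<bar> else x\<^sup>2 * s k)" for k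
      have shift: "(\<lambda>k. b (k + N)) = (\<lambda>k. x\<^sup>2 * s (k + N))" by (auto simp: b_def)
      have smb: "summable b"
        using summable_iff_shift[of b N] shift summable_mult[OF sms[THEN summable_iff_shift[of s N, THEN iffD2]], of "x\<^sup>2"]
        by simp
      have pb: "norm (\<Prod>k<m. wfac t (zs k) w) \<le> exp (suminf b)" for m
      proof (rule prod_bound_aux[OF _ _ smb])
        fix k
        show "norm (wfac t (zs k) w) \<le> exp (b k)"
          using wfac_bound[OF nz[rule_format] assms(2) w] t1
          by (auto simp: b_def s_def power_divide)
        show "b k \<ge> 0" by (auto simp: b_def s_def)
      qed
      have "suminf b = (\<Sum>k. x\<^sup>2 * s (k + N)) + (\<Sum>k<N. b k)"
        using suminf_split_initial_segment[OF smb, of N] shift by simp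
      also have "(\<Sum>k<N. b k) = C * \<bar>x\<bar>"
        by (simp add: b_def C_def sum_distrib_left sum_distrib_right)
      also have "(\<Sum>k. x\<^sup>2 * s (k + N)) = x\<^sup>2 * (\<Sum>k. s (k + N))"
        by (rule suminf_mult) (use sms in simp)
      also have "\<dots> \<le> x\<^sup>2 * \<epsilon>"
        using N[rule_format, of N] by (intro mult_left_mono) auto
      finally have sb: "suminf b \<le> x\<^sup>2 * \<epsilon> + C * \<bar>x\<bar>" by simp
      have "norm (P w) \<le> exp (x\<^sup>2 * \<epsilon> + C * \<bar>x\<bar>)"
        by (rule limb, rule order_trans[OF pb]) (use sb in simp)
      thus "norm (P w) \<le> exp (C * \<bar>x\<bar> + \<epsilon> * x\<^sup>2)" by (simp add: algebra_simps)
    qed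
  qed
qed



lemma asym0:
  fixes \<delta> C :: real
  assumes "\<delta> > 0"
  shows "((\<lambda>x. x ^ n * exp (C * x - \<delta> * x\<^sup>2)) \<longlongrightarrow> 0) at_top"
  using assms by real_asymp

lemma axis_contra:
  fixes m K C \<mu> \<delta> :: real
  assumes "m > 0" "\<delta> > 0"
    and ev: "eventually (\<lambda>x. m * exp (\<mu> * x\<^sup>2) \<le> K * x ^ n * exp (C * x + (\<mu> - \<delta>) * x\<^sup>2)) at_top"
  shows False
proof -
  have "((\<lambda>x. K * (x ^ n * exp (C * x - \<delta> * x\<^sup>2))) \<longlongrightarrow> K * 0) at_top"
    by (intro tendsto_mult tendsto_const asym0 assms)
  hence "eventually (\<lambda>x. K * (x ^ n * exp (C * x - \<delta> * x\<^sup>2)) < m) at_top"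
    using assms(1) by (intro order_tendstoD) simp_all
  from eventually_happens[OF eventually_conj[OF ev this]] obtain x where
    elim: "m * exp (\<mu> * x\<^sup>2) \<le> K * x ^ n * exp (C * x + (\<mu> - \<delta>) * x\<^sup>2)"
      "K * (x ^ n * exp (C * x - \<delta> * x\<^sup>2)) < m" by auto
  show False
  proof -
    have "exp (C * x + (\<mu> - \<delta>) * x\<^sup>2) = exp (\<mu> * x\<^sup>2) * exp (C * x - \<delta> * x\<^sup>2)"
      by (simp add: exp_add[symmetric] algebra_simps)
    with elim(1) have "m * exp (\<mu> * x\<^sup>2) \<le> (K * (x ^ n * exp (C * x - \<delta> * x\<^sup>2))) * exp (\<mu> * x\<^sup>2)"
      by (simp add: algebra_simps)
    hence "m \<le> K * (x ^ n * exp (C * x - \<delta> * x\<^sup>2))" by simp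
    with elim(2) show False by simp
  qed
qed

lemma poly_upper:
  fixes p :: "complex poly"
  shows "norm (poly p z) \<le> (\<Sum>i\<le>degree p. norm (coeff p i)) * max 1 (norm z) ^ degree p"
proof -
  have "norm (poly p z) \<le> (\<Sum>i\<le>degree p. norm (coeff p i * z ^ i))"
    unfolding poly_altdef by (rule norm_sum)
  also have "\<dots> \<le> (\<Sum>i\<le>degree p. norm (coeff p i) * max 1 (norm z) ^ degree p)"
  proof (intro sum_mono)
    fix i assume "i \<in> {..degree p}"
    hence i: "i \<le> degree p" by simp
    have "norm z ^ i \<le> max 1 (norm z) ^ i" by (rule power_mono) auto
    also have "\<dots> \<le> max 1 (norm z) ^ degree p" by (rule power_increasing[OF i]) auto
    finally have "norm z ^ i \<le> max 1 (norm z) ^ degree p" .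
    hence "norm (coeff p i) * norm z ^ i \<le> norm (coeff p i) * max 1 (norm z) ^ degree p"
      by (rule mult_left_mono) simp
    thus "norm (coeff p i * z ^ i) \<le> norm (coeff p i) * max 1 (norm z) ^ degree p"
      by (simp only: norm_mult norm_power)
  qed
  also have "\<dots> = (\<Sum>i\<le>degree p. norm (coeff p i)) * max 1 (norm z) ^ degree p"
    by (simp add: sum_distrib_right)
  finally show ?thesis .
qed

lemma poly_lower:
  fixes p :: "complex poly"
  assumes "p \<noteq> 0"
  shows "\<exists>m>0. \<exists>R. \<forall>z. norm z \<ge> R \<longrightarrow> norm (poly p z) \<ge> m"
proof (cases "degree p = 0")
  case True
  then obtain c where "p = [:c:]" by (metis degree_eq_zeroE)
  with assms show ?thesis by (intro exI[of _ "norm c"]) auto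
next
  case False
  obtain a p' where p: "p = pCons a p'" by (cases p)
  with False have "p' \<noteq> 0" by auto
  from poly_infinity[OF this, of 1 a] obtain r where "\<forall>z. r \<le> norm z \<longrightarrow> 1 \<le> norm (poly (pCons a p') z)" by blast
  thus ?thesis unfolding p by (intro exI[of _ 1]) auto
qed

lemma term_tendsto0:
  fixes p :: "complex poly" and u :: complex
  assumes "norm u = 1" "\<delta> > 0"
  shows "((\<lambda>x::real. poly p (u * complex_of_real x) * complex_of_real (exp (- \<delta> * x\<^sup>2))) \<longlongrightarrow> 0) at_top"
proof -
  define K where "K = (\<Sum>i\<le>degree p. norm (coeff p i))"
  have "((\<lambda>x::real. K * (x ^ degree p * exp (0 * x - \<delta> * x\<^sup>2))) \<longlongrightarrow> K * 0) at_top"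
    by (intro tendsto_mult tendsto_const asym0 assms)
  hence lim: "((\<lambda>x::real. K * (x ^ degree p * exp (0 * x - \<delta> * x\<^sup>2))) \<longlongrightarrow> 0) at_top" by simp
  show ?thesis
  proof (rule Lim_null_comparison[OF _ lim])
    have "eventually (\<lambda>x::real. x \<ge> 1) at_top" by (rule eventually_ge_at_top)
    thus "eventually (\<lambda>x. norm (poly p (u * complex_of_real x) * complex_of_real (exp (- \<delta> * x\<^sup>2)))
            \<le> K * (x ^ degree p * exp (0 * x - \<delta> * x\<^sup>2))) at_top"
    proof eventually_elim
      case (elim x)
      have "norm (poly p (u * complex_of_real x)) \<le> K * max 1 (norm (u * complex_of_real x)) ^ degree p"
        unfolding K_def by (rule poly_upper)
      also have "max 1 (norm (u * complex_of_real x)) = x" using elim assms(1) by (simp add: norm_mult)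
      finally show ?case by (simp add: norm_mult mult_right_mono mult.assoc)
    qed
  qed
qed

lemma dominant:
  fixes p :: "nat \<Rightarrow> complex poly" and \<mu> :: "nat \<Rightarrow> real" and u :: complex
  assumes "finite A" "j \<in> A" "p j \<noteq> 0" "\<forall>i\<in>A. i \<noteq> j \<longrightarrow> p i \<noteq> 0 \<longrightarrow> \<mu> i < \<mu> j" "norm u = 1"
  shows "\<exists>m>0. eventually (\<lambda>x. m * exp (\<mu> j * x\<^sup>2) \<le>
           norm (\<Sum>i\<in>A. poly (p i) (u * complex_of_real x) * complex_of_real (exp (\<mu> i * x\<^sup>2)))) at_top"
proof -
  obtain m R where m: "m > 0" and R: "\<forall>z. norm z \<ge> R \<longrightarrow> norm (poly (p j) z) \<ge> m"
    using poly_lower[OF assms(3)] by blast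
  define T where "T x = (\<Sum>i\<in>A-{j}. poly (p i) (u * complex_of_real x) * complex_of_real (exp ((\<mu> i - \<mu> j) * x\<^sup>2)))" for x
  have "(T \<longlongrightarrow> 0) at_top" unfolding T_def
  proof (rule tendsto_null_sum)
    fix i assume i: "i \<in> A - {j}"
    show "((\<lambda>x. poly (p i) (u * complex_of_real x) * complex_of_real (exp ((\<mu> i - \<mu> j) * x\<^sup>2))) \<longlongrightarrow> 0) at_top"
    proof (cases "p i = 0")
      case False
      with i assms(4) have "\<mu> j - \<mu> i > 0" by auto
      from term_tendsto0[OF assms(5) this, of "p i"] show ?thesis by (simp add: algebra_simps)
    qed simp
  qed
  hence "eventually (\<lambda>x. norm (T x) < m / 2) at_top"
    using m by (intro order_tendstoD(2)[OF tendsto_norm_zero]) simp_all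
  moreover have "eventually (\<lambda>x::real. x \<ge> R) at_top" by (rule eventually_ge_at_top)
  ultimately have "eventually (\<lambda>x. m / 2 * exp (\<mu> j * x\<^sup>2) \<le>
           norm (\<Sum>i\<in>A. poly (p i) (u * complex_of_real x) * complex_of_real (exp (\<mu> i * x\<^sup>2)))) at_top"
  proof eventually_elim
    case (elim x)
    have "norm (u * complex_of_real x) \<ge> R" using elim(2) assms(5) by (simp add: norm_mult)
    hence pj: "norm (poly (p j) (u * complex_of_real x)) \<ge> m" using R by blast
    have "(\<Sum>i\<in>A. poly (p i) (u * complex_of_real x) * complex_of_real (exp (\<mu> i * x\<^sup>2)))
        = complex_of_real (exp (\<mu> j * x\<^sup>2)) * (poly (p j) (u * complex_of_real x) + T x)"
    proof -
      have e: "poly (p i) (u * complex_of_real x) * complex_of_real (exp (\<mu> i * x\<^sup>2)) =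
        complex_of_real (exp (\<mu> j * x\<^sup>2)) * (poly (p i) (u * complex_of_real x) * complex_of_real (exp ((\<mu> i - \<mu> j) * x\<^sup>2)))" for i
      proof -
        have "exp (\<mu> i * x\<^sup>2) = exp (\<mu> j * x\<^sup>2) * exp ((\<mu> i - \<mu> j) * x\<^sup>2)"
          by (simp add: exp_add[symmetric] algebra_simps)
        thus ?thesis by (simp add: mult_ac)
      qed
      show ?thesis unfolding e T_def sum_distrib_left[symmetric] using assms(1,2)
        by (simp add: sum.remove[of A j] distrib_left)
    qed
    hence "norm (\<Sum>i\<in>A. poly (p i) (u * complex_of_real x) * complex_of_real (exp (\<mu> i * x\<^sup>2)))
        = exp (\<mu> j * x\<^sup>2) * norm (poly (p j) (u * complex_of_real x) + T x)"
      by (simp add: norm_mult)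
    moreover have "norm (poly (p j) (u * complex_of_real x) + T x) \<ge> m / 2"
      using pj elim(1) norm_triangle_ineq2[of "poly (p j) (u * complex_of_real x)" "- T x"] by simp
    ultimately show ?case by (simp add: mult.commute mult_left_mono)
  qed
  thus ?thesis using m by (intro exI[of _ "m/2"]) auto
qed

lemma poly_real_coeffs:
  fixes p :: "complex poly"
  assumes "\<And>x. poly p (complex_of_real x) \<in> \<real>"
  shows "coeff p i \<in> \<real>"
proof -
  define p' where "p' = map_poly cnj p"
  have "poly (p - p') (complex_of_real x) = 0" for x
    using assms[of x] by (simp add: p'_def Reals_cnj_iff)
  hence "range (\<lambda>n::nat. complex_of_real (real n)) \<subseteq> {z. poly (p - p') z = 0}"
    by (auto simp del: of_real_of_nat_eq)
  moreover have "infinite (range (\<lambda>n::nat. complex_of_real (real n)))"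
    by (rule range_inj_infinite) (simp add: inj_on_def)
  ultimately have "p - p' = 0" using poly_roots_finite[of "p - p'"] finite_subset by blast
  hence "coeff p i = cnj (coeff p i)" by (metis p'_def coeff_map_poly complex_cnj_zero eq_iff_diff_eq_0)
  thus ?thesis by (simp add: Reals_cnj_iff)
qed



lemma f0_LP2: "(\<lambda>z. exp (- z\<^sup>2)) \<in> LP2"
proof -
  have "canonical_prod 0 (\<lambda>_. 1) (Some 0) (\<lambda>_. 1)" by (simp add: canonical_prod_def)
  hence "LP_repr (\<lambda>z. exp (- z\<^sup>2)) 1" unfolding LP_repr_def
    by (intro exI[of _ "1::real"] exI[of _ "0::nat"] exI[of _ "0::nat"] exI[of _ "0::real"]
        exI[of _ "\<lambda>_. 1::real"] exI[of _ "Some (0::nat)"] exI[of _ "\<lambda>_. 1::complex"]) simp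
  thus ?thesis unfolding LP2_def by (intro CollectI exI[of _ "1::real"]) simp
qed

lemma norm_rep:
  "norm (complex_of_real c * w ^ n * P w * exp (- complex_of_real \<alpha> * w\<^sup>2 + complex_of_real \<beta> * w)) =
   \<bar>c\<bar> * norm w ^ n * norm (P w) * exp (Re (- complex_of_real \<alpha> * w\<^sup>2 + complex_of_real \<beta> * w))"
  by (simp add: norm_mult norm_power norm_exp_eq_Re)

lemma Re_imag: "Re (- complex_of_real \<alpha> * (\<i> * complex_of_real x)\<^sup>2 + complex_of_real \<beta> * (\<i> * complex_of_real x)) = \<alpha> * x\<^sup>2"
  by (simp add: power2_eq_square)

lemma Re_real: "Re (- complex_of_real \<alpha> * (complex_of_real x)\<^sup>2 + complex_of_real \<beta> * (complex_of_real x)) = - \<alpha> * x\<^sup>2 + \<beta> * x"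
  by (simp add: power2_eq_square)

lemma exp_imag: "exp (- (complex_of_real a * (\<i> * complex_of_real x))\<^sup>2) = complex_of_real (exp (a\<^sup>2 * x\<^sup>2))"
proof -
  have "- (complex_of_real a * (\<i> * complex_of_real x))\<^sup>2 = complex_of_real (a\<^sup>2 * x\<^sup>2)"
    by (simp add: power_mult_distrib)
  thus ?thesis by (simp only: exp_of_real)
qed

lemma exp_real: "exp (- (complex_of_real a * (1 * complex_of_real x))\<^sup>2) = complex_of_real (exp ((- a\<^sup>2) * x\<^sup>2))"
proof -
  have "- (complex_of_real a * (1 * complex_of_real x))\<^sup>2 = complex_of_real (- a\<^sup>2 * x\<^sup>2)"
    by (simp add: power_mult_distrib)
  thus ?thesis by (simp only: exp_of_real)
qed

lemma i_not_real: "\<i> \<notin> \<real>"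
  by (simp add: complex_is_Real_iff)

lemma lam_inj:
  fixes q :: real
  assumes "q \<noteq> 0" "\<bar>q\<bar> \<noteq> 1" "(q ^ i)\<^sup>2 = (q ^ j)\<^sup>2"
  shows "i = j"
proof -
  have e: "(q ^ i)\<^sup>2 = (q\<^sup>2) ^ i" for i by (simp add: power_mult[symmetric] mult.commute)
  have "q\<^sup>2 \<noteq> 1" using assms(2) by (metis abs_power2 power2_eq_1_iff abs_1 abs_minus_cancel abs_abs)
  moreover have "q\<^sup>2 > 0" using assms(1) by simp
  ultimately show ?thesis using assms(3) unfolding e by (simp add: power_inject_exp')
qed

lemma only_if_dir:
  fixes q :: real and k :: nat and a :: "nat \<Rightarrow> complex poly"
  assumes q0: "q \<noteq> 0" and q1: "\<bar>q\<bar> \<noteq> 1" and H: "\<forall>f\<in>LP2. T1 q k a f \<in> LP2"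
  shows "\<exists>j\<le>k. (\<forall>i\<le>k. i \<noteq> j \<longrightarrow> a i = 0) \<and> a j \<in> HP"
proof -
  define g where "g = T1 q k a (\<lambda>z. exp (- z\<^sup>2))"
  have gdef: "g z = (\<Sum>i\<le>k. poly (a i) z * exp (- (complex_of_real (q ^ i) * z)\<^sup>2))" for z
    by (simp add: g_def T1_def)
  have "g \<in> LP2" unfolding g_def using H f0_LP2 by blast
  then obtain \<alpha> c n t \<beta> zs fin P where \<alpha>: "\<alpha> > 0" and c: "c \<noteq> 0" and t: "t \<le> 1"
    and cp: "canonical_prod t zs fin P"
    and geq: "\<And>z. g z = complex_of_real c * z ^ n * P z * exp (- complex_of_real \<alpha> * z ^ 2 + complex_of_real \<beta> * z)"
    unfolding LP2_def LP_repr_def by blast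
  define lam where "lam i = (q ^ i)\<^sup>2" for i
  define S where "S = {i. i \<le> k \<and> a i \<noteq> 0}"
  have finS: "finite S" unfolding S_def by simp
  have g_imag: "g (\<i> * complex_of_real x) = (\<Sum>i\<in>{..k}. poly (a i) (\<i> * complex_of_real x) * complex_of_real (exp (lam i * x\<^sup>2)))" for x
    unfolding gdef lam_def exp_imag by simp
  have g_real: "g (1 * complex_of_real x) = (\<Sum>i\<in>{..k}. poly (a i) (1 * complex_of_real x) * complex_of_real (exp ((- lam i) * x\<^sup>2)))" for x
    unfolding gdef lam_def exp_real by simp
  have "S \<noteq> {}"
  proof
    assume "S = {}"
    hence "g \<i> = 0" unfolding gdef S_def by (auto intro!: sum.neutral)
    moreover have "P \<i> \<noteq> 0" by (rule cp_nonzero[OF cp t i_not_real])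
    ultimately show False using c by (simp add: geq)
  qed
  have "Max (lam ` S) \<in> lam ` S" by (rule Max_in) (use finS \<open>S \<noteq> {}\<close> in auto)
  then obtain i1 where i1: "i1 \<in> S" "lam i1 = Max (lam ` S)" by (metis imageE)
  have "Min (lam ` S) \<in> lam ` S" by (rule Min_in) (use finS \<open>S \<noteq> {}\<close> in auto)
  then obtain i0 where i0: "i0 \<in> S" "lam i0 = Min (lam ` S)" by (metis imageE)
  have linj: "lam i = lam j \<Longrightarrow> i = j" for i j using lam_inj[OF q0 q1] by (simp add: lam_def)
  have lmax: "lam i < lam i1" if "i \<in> S" "i \<noteq> i1" for i
  proof -
    have "lam i \<le> lam i1" unfolding i1(2) by (rule Max_ge) (use finS that in auto)
    moreover have "lam i \<noteq> lam i1" using linj that by blast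
    ultimately show ?thesis by simp
  qed
  have lmin: "lam i0 < lam i" if "i \<in> S" "i \<noteq> i0" for i
  proof -
    have "lam i0 \<le> lam i" unfolding i0(2) by (rule Min_le) (use finS that in auto)
    moreover have "lam i \<noteq> lam i0" using linj that by blast
    ultimately show ?thesis by simp
  qed
  have i1k: "i1 \<le> k" "a i1 \<noteq> 0" using i1 by (auto simp: S_def)
  have i0k: "i0 \<le> k" "a i0 \<noteq> 0" using i0 by (auto simp: S_def)
  \<comment> \<open>imaginary axis: alpha >= lam i1\<close>
  have a_ge: "\<alpha> \<ge> lam i1"
  proof (rule ccontr)
    assume "\<not> \<alpha> \<ge> lam i1"
    define \<delta> where "\<delta> = (lam i1 - \<alpha>) / 2"
    have \<delta>: "\<delta> > 0" using \<open>\<not> \<alpha> \<ge> lam i1\<close> by (simp add: \<delta>_def)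
    obtain C where C: "\<forall>x w. (w = complex_of_real x \<or> w = \<i> * complex_of_real x) \<longrightarrow>
            norm (P w) \<le> exp (C * \<bar>x\<bar> + \<delta> * x\<^sup>2)"
      using growth[OF cp t \<delta>] by blast
    obtain m where m: "m > 0" and evm: "eventually (\<lambda>x. m * exp (lam i1 * x\<^sup>2) \<le>
           norm (\<Sum>i\<in>{..k}. poly (a i) (\<i> * complex_of_real x) * complex_of_real (exp (lam i * x\<^sup>2)))) at_top"
      using dominant[of "{..k}" i1 a lam \<i>] i1k lmax by (auto simp: S_def)
    have "eventually (\<lambda>x::real. x \<ge> 0) at_top" by (rule eventually_ge_at_top)
    with evm have "eventually (\<lambda>x. m * exp (lam i1 * x\<^sup>2) \<le> \<bar>c\<bar> * x ^ n * exp (C * x + (lam i1 - \<delta>) * x\<^sup>2)) at_top"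
    proof eventually_elim
      case (elim x)
      have "norm (g (\<i> * complex_of_real x)) = \<bar>c\<bar> * x ^ n * norm (P (\<i> * complex_of_real x)) * exp (\<alpha> * x\<^sup>2)"
        unfolding geq norm_rep Re_imag using elim(2) by (simp add: norm_mult)
      also have "\<dots> \<le> \<bar>c\<bar> * x ^ n * exp (C * x + \<delta> * x\<^sup>2) * exp (\<alpha> * x\<^sup>2)"
        using C[rule_format, of "\<i> * complex_of_real x" x] elim(2)
        by (intro mult_right_mono mult_left_mono) auto
      also have "\<dots> = \<bar>c\<bar> * x ^ n * exp (C * x + (lam i1 - \<delta>) * x\<^sup>2)"
        by (simp add: mult.assoc exp_add[symmetric] \<delta>_def algebra_simps)
      finally show ?case using elim(1) g_imag[of x] by simp
    qed
    thus False by (rule axis_contra[OF m \<delta>])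
  qed
  \<comment> \<open>real axis: i0 = i1\<close>
  have "i0 = i1"
  proof (rule ccontr)
    assume "i0 \<noteq> i1"
    hence lt: "lam i0 < \<alpha>" using lmax[OF i0(1)] a_ge by simp
    define \<delta> where "\<delta> = (\<alpha> - lam i0) / 2"
    have \<delta>: "\<delta> > 0" using lt by (simp add: \<delta>_def)
    obtain C where C: "\<forall>x w. (w = complex_of_real x \<or> w = \<i> * complex_of_real x) \<longrightarrow>
            norm (P w) \<le> exp (C * \<bar>x\<bar> + \<delta> * x\<^sup>2)"
      using growth[OF cp t \<delta>] by blast
    obtain m where m: "m > 0" and evm: "eventually (\<lambda>x. m * exp ((- lam i0) * x\<^sup>2) \<le>
           norm (\<Sum>i\<in>{..k}. poly (a i) (1 * complex_of_real x) * complex_of_real (exp ((- lam i) * x\<^sup>2)))) at_top"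
      using dominant[of "{..k}" i0 a "\<lambda>i. - lam i" 1] i0k lmin by (auto simp: S_def)
    have "eventually (\<lambda>x::real. x \<ge> 0) at_top" by (rule eventually_ge_at_top)
    with evm have "eventually (\<lambda>x. m * exp ((- lam i0) * x\<^sup>2) \<le> \<bar>c\<bar> * x ^ n * exp ((C + \<beta>) * x + ((- lam i0) - \<delta>) * x\<^sup>2)) at_top"
    proof eventually_elim
      case (elim x)
      have "norm (g (complex_of_real x)) = \<bar>c\<bar> * x ^ n * norm (P (complex_of_real x)) * exp (- \<alpha> * x\<^sup>2 + \<beta> * x)"
        unfolding geq norm_rep Re_real using elim(2) by simp
      also have "\<dots> \<le> \<bar>c\<bar> * x ^ n * exp (C * x + \<delta> * x\<^sup>2) * exp (- \<alpha> * x\<^sup>2 + \<beta> * x)"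
        using C[rule_format, of "complex_of_real x" x] elim(2)
        by (intro mult_right_mono mult_left_mono) auto
      also have "\<dots> = \<bar>c\<bar> * x ^ n * exp ((C + \<beta>) * x + ((- lam i0) - \<delta>) * x\<^sup>2)"
        by (simp add: mult.assoc exp_add[symmetric] \<delta>_def algebra_simps)
      finally show ?case using elim(1) g_real[of x] by simp
    qed
    thus False by (rule axis_contra[OF m \<delta>])
  qed
  hence Sj: "S = {i1}" using lmax lmin i1(1) by fastforce
  define j where "j = i1"
  have others: "\<forall>i\<le>k. i \<noteq> j \<longrightarrow> a i = 0" using Sj by (auto simp: S_def j_def)
  have gj: "g z = poly (a j) z * exp (- (complex_of_real (q ^ j) * z)\<^sup>2)" for z
  proof -
    have "g z = (\<Sum>i\<le>k. if i = j then poly (a j) z * exp (- (complex_of_real (q ^ j) * z)\<^sup>2) else 0)"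
      unfolding gdef by (rule sum.cong) (use others in auto)
    thus ?thesis using i1k by (simp add: j_def)
  qed
  have "a j \<in> HP" unfolding HP_def
  proof (intro CollectI conjI allI impI)
    show "a j \<noteq> 0" using i1k by (simp add: j_def)
  next
    fix i
    show "coeff (a j) i \<in> \<real>"
    proof (rule poly_real_coeffs)
      fix x :: real
      define E where "E = exp (- (complex_of_real (q ^ j) * complex_of_real x)\<^sup>2)"
      have E: "E = complex_of_real (exp (- (q ^ j * x)\<^sup>2))" unfolding E_def
        by (simp only: of_real_mult[symmetric] of_real_power[symmetric] of_real_minus[symmetric] exp_of_real)
      have Enz: "E \<noteq> 0" by (simp add: E)
      have "- complex_of_real \<alpha> * (complex_of_real x)\<^sup>2 + complex_of_real \<beta> * complex_of_real x
            = complex_of_real (- \<alpha> * x\<^sup>2 + \<beta> * x)" by simp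
      hence "g (complex_of_real x) \<in> \<real>" unfolding geq
        using cp_real[OF cp, of x] by (simp del: of_real_add of_real_mult of_real_minus of_real_power add: exp_of_real)
      hence "poly (a j) (complex_of_real x) * E \<in> \<real>" by (simp add: gj E_def)
      hence "poly (a j) (complex_of_real x) * E / E \<in> \<real>"
        by (intro Reals_divide) (auto simp only: E Reals_of_real)
      thus "poly (a j) (complex_of_real x) \<in> \<real>" using Enz by simp
    qed
  next
    fix z assume z: "poly (a j) z = 0"
    show "z \<in> \<real>"
    proof (rule ccontr)
      assume nr: "z \<notin> \<real>"
      hence "z \<noteq> 0" by auto
      moreover have "P z \<noteq> 0" by (rule cp_nonzero[OF cp t nr])
      moreover have "g z = 0" using z by (simp add: gj)
      ultimately show False using c by (simp add: geq)
    qed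
  qed
  thus ?thesis using others i1k by (auto simp: j_def)
qed


theorem corollary1p3:
  fixes q :: real and k :: nat and a :: "nat \<Rightarrow> complex poly"
  assumes "q \<noteq> 0" and "\<bar>q\<bar> \<noteq> 1"
  shows "(\<forall>f\<in>LP2. T1 q k a f \<in> LP2) \<longleftrightarrow>
         (\<exists>j\<le>k. (\<forall>i\<le>k. i \<noteq> j \<longrightarrow> a i = 0) \<and> a j \<in> HP)"
proof
  assume "\<forall>f\<in>LP2. T1 q k a f \<in> LP2"
  thus "\<exists>j\<le>k. (\<forall>i\<le>k. i \<noteq> j \<longrightarrow> a i = 0) \<and> a j \<in> HP"
    by (rule only_if_dir[OF assms])
next
  assume "\<exists>j\<le>k. (\<forall>i\<le>k. i \<noteq> j \<longrightarrow> a i = 0) \<and> a j \<in> HP"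
  then obtain j where "j \<le> k" "\<forall>i\<le>k. i \<noteq> j \<longrightarrow> a i = 0" "a j \<in> HP" by blast
  thus "\<forall>f\<in>LP2. T1 q k a f \<in> LP2" using if_dir[OF assms(1)] by blast
qed

end
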